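(* Let $G$ be a digraph with a fixed upward planar drawing and let $s,t\in V(G)$ be such that there is a directed path from $s$ to $t$. Then there is a unique right-most $s$-$t$ path in $G$.
   Context: An upward planar drawing of a digraph is a plane drawing (no edge crossings) in which every directed edge is a curve monotone increasing in the $y$-direction from tail to head. A path is identified with the set of points of $\mathbb{R}^2$ in its drawing. For a path $P$ with endpoints $(x,y)$, $(x',y')$, $y\le y'$, let $\mathrm{Right}(P):=\{(u,v)\in\mathbb{R}^2: y\le v\le y',\ u'<u \text{ for all } u' \text{ with } (u',v)\in P\}$. A right-most $s$-$t$ path is a directed $s$-$t$ path $P$ such that for all directed $s$-$t$ paths $P'$, $P\subseteq P'\cup\mathrm{Right}(P')$. *)

theory Defs
  imports "HOL-Analysis.Analysis"
begin

text \<open>A drawing consists of a point pos v for every vertex (x-coordinate fst, y-coordinate snd)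
  and a curve gam e :: real \<Rightarrow> real \<times> real, parametrised on [0,1], for every edge e.\<close>

definition upward_planar_drawing ::
  "'v set \<Rightarrow> ('v \<times> 'v) set \<Rightarrow> ('v \<Rightarrow> real \<times> real) \<Rightarrow> ('v \<times> 'v \<Rightarrow> real \<Rightarrow> real \<times> real) \<Rightarrow> bool"
where
  "upward_planar_drawing V E pos gam \<longleftrightarrow>
     inj_on pos V \<and>
     (\<forall>e\<in>E. continuous_on {0..1} (gam e)
            \<and> gam e 0 = pos (fst e) \<and> gam e 1 = pos (snd e)
            \<and> strict_mono_on {0..1} (\<lambda>r. snd (gam e r))) \<and>
     (\<forall>e\<in>E. \<forall>v\<in>V. pos v \<in> gam e ` {0..1} \<longrightarrow> v = fst e \<or> v = snd e) \<and>
     (\<forall>e\<in>E. \<forall>e'\<in>E. e \<noteq> e' \<longrightarrow>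
        gam e ` {0..1} \<inter> gam e' ` {0..1} \<subseteq> pos ` ({fst e, snd e} \<inter> {fst e', snd e'}))"

definition dir_path :: "('v \<times> 'v) set \<Rightarrow> 'v \<Rightarrow> 'v \<Rightarrow> 'v list \<Rightarrow> bool" where
  "dir_path E s t ps \<longleftrightarrow> ps \<noteq> [] \<and> hd ps = s \<and> last ps = t \<and>
     (\<forall>i. Suc i < length ps \<longrightarrow> (ps ! i, ps ! Suc i) \<in> E)"

definition path_points ::
  "('v \<Rightarrow> real \<times> real) \<Rightarrow> ('v \<times> 'v \<Rightarrow> real \<Rightarrow> real \<times> real) \<Rightarrow> 'v list \<Rightarrow> (real \<times> real) set"
where
  "path_points pos gam ps = pos ` set ps \<union>
     (\<Union>i\<in>{i. Suc i < length ps}. gam (ps ! i, ps ! Suc i) ` {0..1})"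

definition Right_region :: "real \<Rightarrow> real \<Rightarrow> (real \<times> real) set \<Rightarrow> (real \<times> real) set" where
  "Right_region y y' P = {(u, v). y \<le> v \<and> v \<le> y' \<and> (\<forall>u'. (u', v) \<in> P \<longrightarrow> u' < u)}"

definition Right_path ::
  "('v \<Rightarrow> real \<times> real) \<Rightarrow> ('v \<times> 'v \<Rightarrow> real \<Rightarrow> real \<times> real) \<Rightarrow> 'v list \<Rightarrow> (real \<times> real) set"
where
  "Right_path pos gam ps = Right_region (snd (pos (hd ps))) (snd (pos (last ps))) (path_points pos gam ps)"

definition rightmost_path ::
  "('v \<times> 'v) set \<Rightarrow> ('v \<Rightarrow> real \<times> real) \<Rightarrow> ('v \<times> 'v \<Rightarrow> real \<Rightarrow> real \<times> real) \<Rightarrow> 'v \<Rightarrow> 'v \<Rightarrow> 'v list \<Rightarrow> bool"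
where
  "rightmost_path E pos gam s t ps \<longleftrightarrow> dir_path E s t ps \<and>
     (\<forall>ps'. dir_path E s t ps' \<longrightarrow>
        path_points pos gam ps \<subseteq> path_points pos gam ps' \<union> Right_path pos gam ps')"

end

theory Submission
  imports Defs
begin



definition good :: "(real \<times> real) set \<Rightarrow> real \<Rightarrow> real \<Rightarrow> bool" where
  "good A lo hi \<longleftrightarrow> compact A \<and> (\<forall>p\<in>A. lo \<le> snd p \<and> snd p \<le> hi) \<and>
     (\<forall>w. lo \<le> w \<and> w \<le> hi \<longrightarrow> (\<exists>x. (x,w)\<in>A)) \<and>
     (\<forall>x x' w. (x,w)\<in>A \<longrightarrow> (x',w)\<in>A \<longrightarrow> x = x')"

definition geq :: "(real \<times> real) set \<Rightarrow> (real \<times> real) set \<Rightarrow> bool" where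
  "geq A B \<longleftrightarrow> (\<forall>x x' w. (x,w)\<in>A \<longrightarrow> (x',w)\<in>B \<longrightarrow> x' \<le> x)"

definition fx :: "(real \<times> real) set \<Rightarrow> real \<Rightarrow> real" where
  "fx A w = (THE x. (x,w)\<in>A)"

lemma good_fx: assumes "good A lo hi" "lo \<le> w" "w \<le> hi" shows "(fx A w, w) \<in> A"
proof -
  obtain x where "(x,w)\<in>A" using assms unfolding good_def by blast
  hence "fx A w = x" unfolding fx_def using assms(1) unfolding good_def by (intro the_equality) auto
  thus ?thesis using \<open>(x,w)\<in>A\<close> by simp
qed

lemma good_uniq: "good A lo hi \<Longrightarrow> (x,w)\<in>A \<Longrightarrow> (x',w)\<in>A \<Longrightarrow> x = x'"
  unfolding good_def by blast

lemma good_fx_eq: "good A lo hi \<Longrightarrow> (x,w)\<in>A \<Longrightarrow> fx A w = x"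
  unfolding fx_def using good_uniq by (intro the_equality) blast+

lemma good_heights: "good A lo hi \<Longrightarrow> p \<in> A \<Longrightarrow> lo \<le> snd p \<and> snd p \<le> hi"
  unfolding good_def by blast

lemma good_refl: "good A lo hi \<Longrightarrow> geq A A"
  unfolding geq_def using good_uniq by fastforce

lemma geq_trans: "geq A B \<Longrightarrow> geq B C \<Longrightarrow> good B lo hi \<Longrightarrow> good C lo hi \<Longrightarrow> geq A C"
  unfolding geq_def
proof (intro allI impI)
  fix x x'' w assume ab: "\<forall>x x' w. (x, w) \<in> A \<longrightarrow> (x', w) \<in> B \<longrightarrow> x' \<le> x"
    and bc: "\<forall>x x' w. (x, w) \<in> B \<longrightarrow> (x', w) \<in> C \<longrightarrow> x' \<le> x" and gB: "good B lo hi" and gC: "good C lo hi"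
    and 1: "(x,w)\<in>A" and 2: "(x'',w)\<in>C"
  have "lo \<le> w" "w \<le> hi" using good_heights[OF gC 2] by auto
  then obtain x' where "(x',w)\<in>B" using gB unfolding good_def by blast
  thus "x'' \<le> x" using ab bc 1 2 by force
qed

lemma good_Un:
  assumes "good A lo m" "good B m hi" "p0 \<in> A" "p0 \<in> B" "snd p0 = m"
  shows "good (A \<union> B) lo hi"
proof -
  have lm: "lo \<le> m" "m \<le> hi" using good_heights[OF assms(1,3)] good_heights[OF assms(2,4)] assms(5) by auto
  have "compact (A \<union> B)" using assms(1,2) unfolding good_def by auto
  moreover have "\<forall>p\<in>A\<union>B. lo \<le> snd p \<and> snd p \<le> hi" using assms(1,2) lm unfolding good_def by force
  moreover have "\<forall>w. lo \<le> w \<and> w \<le> hi \<longrightarrow> (\<exists>x. (x,w)\<in>A\<union>B)"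
  proof (intro allI impI)
    fix w assume "lo \<le> w \<and> w \<le> hi"
    show "\<exists>x. (x,w)\<in>A\<union>B"
    proof (cases "w \<le> m")
      case True thus ?thesis using assms(1) \<open>lo \<le> w \<and> w \<le> hi\<close> unfolding good_def by blast
    next
      case False hence "m \<le> w" by simp
      thus ?thesis using assms(2) \<open>lo \<le> w \<and> w \<le> hi\<close> unfolding good_def by blast
    qed
  qed
  moreover have "\<forall>x x' w. (x,w)\<in>A\<union>B \<longrightarrow> (x',w)\<in>A\<union>B \<longrightarrow> x = x'"
  proof (intro allI impI)
    fix x x' w assume 1: "(x,w)\<in>A\<union>B" and 2: "(x',w)\<in>A\<union>B"
    have c: "x = x'" if "(x,w)\<in>A" "(x',w)\<in>B" for x x'
    proof -
      have "w = m" using good_heights[OF assms(1) that(1)] good_heights[OF assms(2) that(2)] by auto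
      hence "x = fst p0" "x' = fst p0"
        using good_uniq[OF assms(1) that(1), of "fst p0"] good_uniq[OF assms(2) that(2), of "fst p0"]
          assms(3,4,5) by (metis prod.collapse)+
      thus ?thesis by simp
    qed
    show "x = x'" using 1 2 c[of x x'] c[of x' x] good_uniq[OF assms(1)] good_uniq[OF assms(2)] by blast
  qed
  ultimately show ?thesis unfolding good_def by blast
qed

lemma good_cont: assumes "good A lo hi" shows "continuous_on {lo..hi} (fx A)"
proof (rule continuous_from_closed_graph[where T = "fst ` A"])
  show "compact (fst ` A)" using assms unfolding good_def
    by (intro compact_continuous_image continuous_intros) auto
  show "fx A \<in> {lo..hi} \<rightarrow> fst ` A" using good_fx[OF assms] by force
  have "(\<lambda>x. (x, fx A x)) ` {lo..hi} = prod.swap ` A"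
  proof
    show "(\<lambda>x. (x, fx A x)) ` {lo..hi} \<subseteq> prod.swap ` A"
      using good_fx[OF assms] by (auto intro!: image_eqI[where x = "(fx A _, _)"])
    show "prod.swap ` A \<subseteq> (\<lambda>x. (x, fx A x)) ` {lo..hi}"
    proof
      fix q assume "q \<in> prod.swap ` A"
      then obtain x w where xw: "(x,w)\<in>A" "q = (w,x)" by auto
      thus "q \<in> (\<lambda>x. (x, fx A x)) ` {lo..hi}"
        using good_fx_eq[OF assms xw(1)] good_heights[OF assms xw(1)] by force
    qed
  qed
  moreover have "compact (prod.swap ` A)" using assms unfolding good_def
    by (intro compact_continuous_image continuous_intros) auto
  ultimately show "closed ((\<lambda>x. (x, fx A x)) ` {lo..hi})" by (simp add: compact_imp_closed)
qed

lemma geq_fx: assumes "good A lo hi" "good B lo hi" "\<forall>w\<in>{lo..hi}. fx B w \<le> fx A w" shows "geq A B"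
  unfolding geq_def
proof (intro allI impI)
  fix x x' w assume 1: "(x,w)\<in>A" and 2: "(x',w)\<in>B"
  thus "x' \<le> x" using good_fx_eq[OF assms(1) 1] good_fx_eq[OF assms(2) 2] good_heights[OF assms(1) 1] assms(3) by auto
qed

lemma crossing:
  assumes gA: "good A lo hi" and gB: "good B lo hi" and lh: "lo \<le> hi"
    and e1: "fx A lo = fx B lo" and e2: "fx A hi = fx B hi"
    and disj: "\<forall>p\<in>A\<inter>B. snd p = lo \<or> snd p = hi"
  shows "geq A B \<or> geq B A"
proof (rule ccontr)
  assume "\<not> (geq A B \<or> geq B A)"
  then obtain w1 w2 where w1: "w1\<in>{lo..hi}" "fx A w1 < fx B w1" and w2: "w2\<in>{lo..hi}" "fx B w2 < fx A w2"
    using geq_fx[OF gA gB] geq_fx[OF gB gA] by force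
  define g where "g = (\<lambda>w. fx A w - fx B w)"
  have cg: "continuous_on {lo..hi} g" unfolding g_def using good_cont[OF gA] good_cont[OF gB]
    by (intro continuous_intros)
  have nz: "g w \<noteq> 0" if "lo < w" "w < hi" for w
  proof
    assume "g w = 0"
    hence "(fx A w, w) \<in> A \<inter> B" using good_fx[OF gA, of w] good_fx[OF gB, of w] that unfolding g_def by auto
    hence "snd (fx A w, w) = lo \<or> snd (fx A w, w) = hi" using disj by blast
    thus False using that by auto
  qed
  have "g w1 < 0" "g w2 > 0" using w1 w2 unfolding g_def by auto
  have "\<exists>w. min w1 w2 \<le> w \<and> w \<le> max w1 w2 \<and> g w = 0"
  proof (cases "w1 \<le> w2")
    case True
    show ?thesis using IVT'[of g w1 0 w2] True \<open>g w1 < 0\<close> \<open>g w2 > 0\<close>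
        continuous_on_subset[OF cg, of "{w1..w2}"] w1 w2 by auto
  next
    case False
    show ?thesis using IVT2'[of g w1 0 w2] False \<open>g w1 < 0\<close> \<open>g w2 > 0\<close>
        continuous_on_subset[OF cg, of "{w2..w1}"] w1 w2 by auto
  qed
  then obtain w where w: "min w1 w2 \<le> w" "w \<le> max w1 w2" "g w = 0" by blast
  have "g lo = 0" "g hi = 0" using e1 e2 unfolding g_def by auto
  hence "w1 \<noteq> lo" "w1 \<noteq> hi" "w2 \<noteq> lo" "w2 \<noteq> hi" using \<open>g w1 < 0\<close> \<open>g w2 > 0\<close> by auto
  hence "lo < w" "w < hi" using w w1 w2 by auto
  thus False using nz w by blast
qed




fun vp :: "('v \<times> 'v) set \<Rightarrow> 'v list \<Rightarrow> bool" where
  "vp E [] = False" | "vp E [u] = True" | "vp E (u#v#r) = ((u,v)\<in>E \<and> vp E (v#r))"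

lemma vp_idx: "ps \<noteq> [] \<Longrightarrow> (\<forall>i. Suc i < length ps \<longrightarrow> (ps!i, ps!Suc i)\<in>E) \<longleftrightarrow> vp E ps"
proof (induction E ps rule: vp.induct)
  case (3 E u v r)
  have "(\<forall>i. Suc i < length (u#v#r) \<longrightarrow> ((u#v#r)!i, (u#v#r)!Suc i)\<in>E) \<longleftrightarrow>
        (u,v)\<in>E \<and> (\<forall>i. Suc i < length (v#r) \<longrightarrow> ((v#r)!i, (v#r)!Suc i)\<in>E)"
    (is "?L \<longleftrightarrow> ?R")
  proof
    assume ?L thus ?R by (metis Suc_less_eq length_Cons nth_Cons_0 nth_Cons_Suc zero_less_Suc)
  next
    assume r: ?R show ?L
    proof (intro allI impI)
      fix i assume "Suc i < length (u#v#r)"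
      thus "((u#v#r)!i, (u#v#r)!Suc i)\<in>E" using r by (cases i) auto
    qed
  qed
  thus ?case using 3 by simp
qed auto

lemma dir_path_vp: "dir_path E s t ps \<longleftrightarrow> vp E ps \<and> hd ps = s \<and> last ps = t"
  unfolding dir_path_def using vp_idx by (metis vp.simps(1))

lemma pp_single: "path_points pos gam [u] = {pos u}"
  unfolding path_points_def by simp

lemma pp_alt: "path_points pos gam ps = pos ` set ps \<union> (\<Union>e\<in>set (zip ps (tl ps)). gam e ` {0..1})"
proof -
  have "set (zip ps (tl ps)) = (\<lambda>i. (ps!i, ps!Suc i)) ` {i. Suc i < length ps}"
    by (auto simp: set_zip nth_tl)
  thus ?thesis unfolding path_points_def by simp
qed

lemma pp_cons2: "path_points pos gam (u#v#r) = insert (pos u) (gam (u,v) ` {0..1} \<union> path_points pos gam (v#r))"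
  unfolding pp_alt by auto

lemma pp_app: "path_points pos gam (X @ c # Y) = path_points pos gam (X @ [c]) \<union> path_points pos gam (c # Y)"
proof (induction X)
  case Nil
  have "pos c \<in> path_points pos gam (c # Y)" unfolding path_points_def by simp
  thus ?case by (simp add: pp_single insert_absorb)
next
  case (Cons u X)
  show ?case
  proof (cases X)
    case Nil
    have "pos c \<in> path_points pos gam (c # Y)" unfolding path_points_def by simp
    thus ?thesis using Nil by (auto simp add: pp_cons2 pp_single)
  next
    case (Cons v X')
    thus ?thesis using Cons.IH by (simp add: pp_cons2 Un_assoc)
  qed
qed

lemma vp_app: "vp E (X @ c # Y) \<longleftrightarrow> vp E (X @ [c]) \<and> vp E (c # Y)"
proof (induction X)
  case Nil thus ?case by simp
next
  case (Cons u X) thus ?case by (cases X) auto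
qed

lemma zip_cons2: "set (zip (u#v#r) (tl (u#v#r))) = insert (u,v) (set (zip (v#r) (tl (v#r))))"
  by simp

lemma edges_set: "(p,q) \<in> set (zip ps (tl ps)) \<Longrightarrow> p \<in> set ps \<and> q \<in> set ps"
  by (cases ps) (auto dest: set_zip_leftD set_zip_rightD)

lemma vp_edges: "vp E ps \<Longrightarrow> set (zip ps (tl ps)) \<subseteq> E"
  by (induction E ps rule: vp.induct) auto

lemma vp_ne: "vp E ps \<Longrightarrow> ps \<noteq> []" by auto

locale drw =
  fixes V :: "'v set" and E :: "('v \<times> 'v) set"
    and pos :: "'v \<Rightarrow> real \<times> real" and gam :: "'v \<times> 'v \<Rightarrow> real \<Rightarrow> real \<times> real"
  assumes EV: "E \<subseteq> V \<times> V" and D: "upward_planar_drawing V E pos gam"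
begin

abbreviation "y v \<equiv> snd (pos v)"
abbreviation "pp \<equiv> path_points pos gam"

lemmas DD = D[unfolded upward_planar_drawing_def]
lemma D1: "inj_on pos V" using DD by (rule conjunct1)
lemma D2: "e\<in>E \<Longrightarrow> continuous_on {0..1} (gam e) \<and> gam e 0 = pos (fst e) \<and> gam e 1 = pos (snd e)
            \<and> strict_mono_on {0..1} (\<lambda>r. snd (gam e r))"
  using conjunct1[OF conjunct2[OF DD]] by (rule bspec)
lemma D3: "e\<in>E \<Longrightarrow> v\<in>V \<Longrightarrow> pos v \<in> gam e ` {0..1} \<Longrightarrow> v = fst e \<or> v = snd e"
  using conjunct1[OF conjunct2[OF conjunct2[OF DD]]] by blast
lemma D4: "e\<in>E \<Longrightarrow> e'\<in>E \<Longrightarrow> e \<noteq> e' \<Longrightarrow>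
        gam e ` {0..1} \<inter> gam e' ` {0..1} \<subseteq> pos ` ({fst e, snd e} \<inter> {fst e', snd e'})"
  using conjunct2[OF conjunct2[OF conjunct2[OF DD]]] by blast

lemma edge_good:
  assumes e: "(u,v)\<in>E"
  shows "y u < y v" "good (gam (u,v) ` {0..1}) (y u) (y v)"
    "pos u \<in> gam (u,v) ` {0..1}" "pos v \<in> gam (u,v) ` {0..1}"
proof -
  note d = D2[OF e]
  let ?g = "gam (u,v)"
  let ?h = "\<lambda>r. snd (?g r)"
  have sm: "strict_mono_on {0..1} ?h" using d by simp
  have g0: "?g 0 = pos u" and g1: "?g 1 = pos v" using d by auto
  have h0: "?h 0 = y u" and h1: "?h 1 = y v" using g0 g1 by auto
  have smr: "?h r < ?h r'" if "r\<in>{0..1}" "r'\<in>{0..1}" "r < r'" for r r'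
    using sm that unfolding strict_mono_on_def by blast
  show "y u < y v" using smr[of 0 1] h0 h1 by simp
  show "pos u \<in> ?g ` {0..1}" by (rule rev_image_eqI[of 0]) (auto simp: g0)
  show "pos v \<in> ?g ` {0..1}" by (rule rev_image_eqI[of 1]) (auto simp: g1)
  have gc: "continuous_on {0..1} ?g" using d by blast
  have hc: "continuous_on {0..1} ?h" using continuous_on_snd[OF gc] .
  have mono: "?h r \<le> ?h r'" if "r\<in>{0..1}" "r'\<in>{0..1}" "r \<le> r'" for r r'
  proof (cases "r = r'")
    case False
    hence "r < r'" using that by simp
    thus ?thesis using smr[OF that(1,2)] by (simp add: less_imp_le)
  qed simp
  have hcpt: "compact (?g ` {0..1})" using gc by (intro compact_continuous_image) auto
  have h2: "\<forall>p\<in>?g ` {0..1}. y u \<le> snd p \<and> snd p \<le> y v"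
  proof
    fix p assume "p \<in> ?g ` {0..1}"
    then obtain r where r: "r \<in> {0..1}" "p = ?g r" by blast
    have "?h 0 \<le> ?h r" "?h r \<le> ?h 1" using mono[of 0 r] mono[of r 1] r(1) by simp_all
    thus "y u \<le> snd p \<and> snd p \<le> y v" using r(2) h0 h1 by simp
  qed
  have h3: "\<forall>w. y u \<le> w \<and> w \<le> y v \<longrightarrow> (\<exists>x. (x,w)\<in>?g ` {0..1})"
  proof (intro allI impI)
    fix w assume w: "y u \<le> w \<and> w \<le> y v"
    have "\<exists>r. 0 \<le> r \<and> r \<le> 1 \<and> ?h r = w"
      by (rule IVT'[of ?h 0 w 1]) (use w h0 h1 hc in auto)
    then obtain r where r: "0 \<le> r" "r \<le> 1" "?h r = w" by blast
    have "(fst (?g r), w) = ?g r" using r(3) by (metis prod.collapse)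
    hence "(fst (?g r), w) \<in> ?g ` {0..1}" using r(1,2) by (metis atLeastAtMost_iff image_eqI)
    thus "\<exists>x. (x,w)\<in>?g ` {0..1}" by blast
  qed
  have h4: "\<forall>x x' w. (x,w)\<in>?g ` {0..1} \<longrightarrow> (x',w)\<in>?g ` {0..1} \<longrightarrow> x = x'"
  proof (intro allI impI)
    fix x x' w assume a1: "(x,w)\<in>?g ` {0..1}" and a2: "(x',w)\<in>?g ` {0..1}"
    obtain r where r: "r\<in>{0..1}" "?g r = (x,w)" using a1 by (metis imageE)
    obtain r' where r': "r'\<in>{0..1}" "?g r' = (x',w)" using a2 by (metis imageE)
    have "r = r'"
    proof (rule ccontr)
      assume "r \<noteq> r'"
      hence "r < r' \<or> r' < r" by linarith
      hence "?h r < ?h r' \<or> ?h r' < ?h r" using smr[OF r(1) r'(1)] smr[OF r'(1) r(1)] by blast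
      hence "?h r \<noteq> ?h r'" by auto
      thus False using r(2) r'(2) by simp
    qed
    thus "x = x'" using r(2) r'(2) by simp
  qed
  show "good (?g ` {0..1}) (y u) (y v)" unfolding good_def by (intro conjI hcpt h2 h3 h4)
qed

lemma vp_sorted: "vp E P \<Longrightarrow> sorted_wrt (\<lambda>u v. y u < y v) P"
proof (induction P rule: induct_list012)
  case (3 u v r)
  have e: "(u,v)\<in>E" and r: "vp E (v#r)" using 3(3) by auto
  have s: "sorted_wrt (\<lambda>u v. y u < y v) (v#r)" using 3(2) r by blast
  have "y u < y v" using edge_good(1)[OF e] .
  hence "\<forall>x\<in>set (v#r). y u < y x" using s by auto
  thus ?case using s by simp
qed auto

lemma vp_V: "vp E P \<Longrightarrow> hd P \<in> V \<Longrightarrow> set P \<subseteq> V"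
proof (induction P rule: induct_list012)
  case (3 u v r)
  have "(u,v)\<in>E" "vp E (v#r)" using 3(3) by auto
  thus ?case using 3 EV by auto
qed auto

lemma pp_cons2E: "(u,v)\<in>E \<Longrightarrow> pp (u#v#r) = gam (u,v) ` {0..1} \<union> pp (v#r)"
  using pp_cons2[of pos gam u v r] edge_good(3)[of u v] by auto

lemma good_path: "vp E P \<Longrightarrow> good (pp P) (y (hd P)) (y (last P)) \<and> pos (hd P) \<in> pp P \<and> pos (last P) \<in> pp P"
proof (induction P rule: induct_list012)
  case (2 u)
  have "good {pos u} (y u) (y u)" unfolding good_def by (auto simp: prod_eq_iff)
  thus ?case by (simp add: pp_single)
next
  case (3 u v r)
  have e: "(u,v)\<in>E" and r: "vp E (v#r)" using 3(3) by auto
  have IH: "good (pp (v#r)) (y v) (y (last (v#r)))" "pos v \<in> pp (v#r)" "pos (last (v#r)) \<in> pp (v#r)"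
    using 3(2) r by auto
  have "good (gam (u,v) ` {0..1} \<union> pp (v#r)) (y u) (y (last (v#r)))"
    by (rule good_Un[OF edge_good(2)[OF e] IH(1) edge_good(4)[OF e] IH(2)]) simp
  thus ?case using pp_cons2E[OF e, of r] IH edge_good(3)[OF e] by auto
qed auto

lemma sorted_hd_last: "sorted_wrt (\<lambda>u v. y u < y v) P \<Longrightarrow> P \<noteq> [] \<Longrightarrow> hd P = last P \<Longrightarrow> P = [hd P]"
  by (cases P) (auto, metis last_in_set order_less_irrefl)

lemma vertex_in: assumes "vp E P" "set P \<subseteq> V" "v \<in> V" "pos v \<in> pp P" shows "v \<in> set P"
proof -
  have "pos v \<in> pos ` set P \<or> (\<exists>e\<in>set (zip P (tl P)). pos v \<in> gam e ` {0..1})"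
    using assms(4) unfolding pp_alt by blast
  thus ?thesis
  proof
    assume "pos v \<in> pos ` set P"
    then obtain u where "u \<in> set P" "pos v = pos u" by blast
    thus ?thesis using D1 assms(2,3) by (metis inj_onD subsetD)
  next
    assume "\<exists>e\<in>set (zip P (tl P)). pos v \<in> gam e ` {0..1}"
    then obtain p q where pq: "(p,q)\<in>set (zip P (tl P))" "pos v \<in> gam (p,q) ` {0..1}" by auto
    have "(p,q)\<in>E" using vp_edges[OF assms(1)] pq(1) by auto
    hence "v = p \<or> v = q" using D3[of "(p,q)" v] pq(2) assms(3) by auto
    thus ?thesis using edges_set[OF pq(1)] by auto
  qed
qed

lemma inter:
  assumes "vp E P" "vp E Q" "set P \<subseteq> V" "set Q \<subseteq> V" "p \<in> pp P" "p \<in> pp Q"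
  shows "(\<exists>v\<in>set P \<inter> set Q. p = pos v) \<or> (\<exists>e. e\<in>set (zip P (tl P)) \<and> e \<in> set (zip Q (tl Q)))"
proof -
  have P: "p \<in> pos ` set P \<or> (\<exists>e\<in>set (zip P (tl P)). p \<in> gam e ` {0..1})"
    using assms(5) unfolding pp_alt by blast
  have Q: "p \<in> pos ` set Q \<or> (\<exists>e\<in>set (zip Q (tl Q)). p \<in> gam e ` {0..1})"
    using assms(6) unfolding pp_alt by blast
  show ?thesis
  proof (cases "p \<in> pos ` set P")
    case True
    then obtain v where v: "v \<in> set P" "p = pos v" by blast
    hence "v \<in> set Q" using vertex_in[OF assms(2,4)] assms(3,6) by auto
    thus ?thesis using v by auto
  next
    case nP: False
    then obtain e where e: "e\<in>set (zip P (tl P))" "p \<in> gam e ` {0..1}" using P by blast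
    show ?thesis
    proof (cases "p \<in> pos ` set Q")
      case True
      then obtain v where v: "v \<in> set Q" "p = pos v" by blast
      hence "v \<in> set P" using vertex_in[OF assms(1,3)] assms(4,5) by auto
      thus ?thesis using v by auto
    next
      case False
      then obtain e' where e': "e'\<in>set (zip Q (tl Q))" "p \<in> gam e' ` {0..1}" using Q by blast
      show ?thesis
      proof (cases "e = e'")
        case True hence "\<exists>e. e\<in>set (zip P (tl P)) \<and> e \<in> set (zip Q (tl Q))" using e e' by blast
        thus ?thesis by blast
      next
        case False
        have "e \<in> E" "e' \<in> E" using e e' vp_edges assms(1,2) by auto
        hence "p \<in> pos ` ({fst e, snd e} \<inter> {fst e', snd e'})" using D4[of e e'] False e e' by auto
        then obtain v where "v \<in> {fst e, snd e}" "v \<in> {fst e', snd e'}" "p = pos v" by blast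
        moreover have "fst e \<in> set P" "snd e \<in> set P" using edges_set[of "fst e" "snd e" P] e by auto
        ultimately have "p \<in> pos ` set P" by auto
        thus ?thesis using nP by blast
      qed
    qed
  qed
qed

lemma shared_edge:
  assumes "vp E X" "hd X = a" "last X = c" "(a,c) \<in> set (zip X (tl X))"
  shows "X = [a,c]"
  using assms
proof (induction X arbitrary: a rule: induct_list012)
  case (3 u v r)
  have s: "sorted_wrt (\<lambda>u v. y u < y v) (u#v#r)" using vp_sorted 3(3) by blast
  have "(a,c) = (u,v) \<or> (a,c) \<in> set (zip (v#r) r)" using 3(6) by simp
  thus ?case
  proof
    assume "(a,c) = (u,v)"
    hence "v = c" "last (v#r) = c" using 3(5) by auto
    hence "v#r = [v]" using sorted_hd_last[of "v#r"] s by auto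
    thus ?thesis using \<open>(a,c) = (u,v)\<close> by auto
  next
    assume "(a,c) \<in> set (zip (v#r) r)"
    hence "a \<in> set (v#r)" by (auto dest: set_zip_leftD)
    moreover have "a = u" using 3(4) by simp
    ultimately show ?thesis using s by auto
  qed
qed auto

lemma lists_eq: "sorted_wrt (\<lambda>u v. y u < y v) xs \<Longrightarrow> sorted_wrt (\<lambda>u v. y u < y v) ys \<Longrightarrow> set xs = set ys \<Longrightarrow> xs = ys"
proof (induction xs arbitrary: ys)
  case Nil thus ?case by simp
next
  case (Cons x xs)
  then obtain z zs where ys: "ys = z # zs" by (cases ys) auto
  have "x = z"
  proof (rule ccontr)
    assume "x \<noteq> z"
    hence "z \<in> set xs" "x \<in> set zs" using Cons.prems(3) ys by (auto simp: set_eq_iff)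
    hence "y x < y z" "y z < y x" using Cons.prems(1,2) ys by auto
    thus False by simp
  qed
  moreover have "set xs = set zs"
  proof -
    have "x \<notin> set xs" "z \<notin> set zs" using Cons.prems(1,2) ys by auto
    thus ?thesis using Cons.prems(3) ys \<open>x = z\<close> by auto
  qed
  ultimately show ?case using Cons ys by auto
qed

end



lemma geq_union:
  assumes "geq S A" "geq R B" "good S lo m" "good A lo m" "good R m hi" "good B m hi"
    "p0 \<in> S" "p0 \<in> A" "p0 \<in> R" "p0 \<in> B" "snd p0 = m"
  shows "geq (S \<union> R) (A \<union> B)"
  unfolding geq_def
proof (intro allI impI)
  fix x x' w assume 1: "(x,w) \<in> S \<union> R" and 2: "(x',w) \<in> A \<union> B"
  have p0: "p0 = (fst p0, m)" using assms(11) by (metis prod.collapse)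
  show "x' \<le> x"
  proof (cases "(x,w) \<in> S")
    case S: True
    show ?thesis
    proof (cases "(x',w)\<in>A")
      case True thus ?thesis using assms(1) S unfolding geq_def by blast
    next
      case False hence B: "(x',w)\<in>B" using 2 by blast
      have "w = m" using good_heights[OF assms(3) S] good_heights[OF assms(6) B] by auto
      thus ?thesis using good_uniq[OF assms(3) S, of "fst p0"] good_uniq[OF assms(6) B, of "fst p0"]
        assms(7,10) p0 by auto
    qed
  next
    case False hence R: "(x,w)\<in>R" using 1 by blast
    show ?thesis
    proof (cases "(x',w)\<in>B")
      case True thus ?thesis using assms(2) R unfolding geq_def by blast
    next
      case False hence A: "(x',w)\<in>A" using 2 by blast
      have "w = m" using good_heights[OF assms(5) R] good_heights[OF assms(4) A] by auto
      thus ?thesis using good_uniq[OF assms(5) R, of "fst p0"] good_uniq[OF assms(4) A, of "fst p0"]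
        assms(8,9) p0 by auto
    qed
  qed
qed

context drw begin

lemma pos_pt: "(fst (pos v), y v) = pos v" by simp

lemma merge:
  "vp E P \<Longrightarrow> vp E Q \<Longrightarrow> hd P = hd Q \<Longrightarrow> last P = last Q \<Longrightarrow> hd P \<in> V \<Longrightarrow>
   \<exists>R. vp E R \<and> hd R = hd P \<and> last R = last P \<and> geq (pp R) (pp P) \<and> geq (pp R) (pp Q)"
proof (induction "length P" arbitrary: P Q rule: less_induct)
  case (less P Q)
  define a where "a = hd P"
  define b where "b = last P"
  have sP: "sorted_wrt (\<lambda>u v. y u < y v) P" and sQ: "sorted_wrt (\<lambda>u v. y u < y v) Q"
    using vp_sorted less.prems by auto
  have gP: "good (pp P) (y a) (y b)" "pos a \<in> pp P" "pos b \<in> pp P"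
    using good_path[OF less.prems(1)] unfolding a_def b_def by auto
  have gQ: "good (pp Q) (y a) (y b)" "pos a \<in> pp Q" "pos b \<in> pp Q"
    using good_path[OF less.prems(2)] less.prems(3,4) unfolding a_def b_def by auto
  have VP: "set P \<subseteq> V" using vp_V less.prems(1,5) by auto
  have VQ: "set Q \<subseteq> V" using vp_V less.prems(2,3,5) by auto
  have Pne: "P \<noteq> []" "Q \<noteq> []" using less.prems(1,2) by auto
  show ?case
  proof (cases "a = b")
    case True
    have "P = [a]" "Q = [a]" using sorted_hd_last[OF sP Pne(1)] sorted_hd_last[OF sQ Pne(2)]
      True less.prems(3,4) unfolding a_def b_def by auto
    hence "geq (pp [a]) (pp [a])" using good_refl[OF gP(1)] by simp
    thus ?thesis using \<open>P = [a]\<close> \<open>Q = [a]\<close> by (intro exI[of _ "[a]"]) simp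
  next
    case False
    define C where "C = (set P \<inter> set Q) - {a}"
    have bC: "b \<in> C" unfolding C_def b_def using False Pne less.prems(4) unfolding b_def
      by (metis DiffI IntI last_in_set singletonD)
    have fC: "finite C" unfolding C_def by auto
    have "Min (y ` C) \<in> y ` C" using fC bC by (intro Min_in) auto
    then obtain c where cC: "c \<in> C" "y c = Min (y ` C)" by auto
    have cmin: "y c \<le> y x" if "x \<in> C" for x using cC(2) fC that by simp
    have cP: "c \<in> set P" and cQ: "c \<in> set Q" and ca: "c \<noteq> a" using cC(1) unfolding C_def by auto
    obtain P1 P2 where P: "P = P1 @ c # P2" using split_list[OF cP] by blast
    obtain Q1 Q2 where Q: "Q = Q1 @ c # Q2" using split_list[OF cQ] by blast
    have P1ne: "P1 \<noteq> []" using P ca unfolding a_def by auto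
    have Q1ne: "Q1 \<noteq> []" using Q ca less.prems(3) unfolding a_def by auto
    have hP1: "hd P1 = a" using P P1ne unfolding a_def by simp
    have hQ1: "hd Q1 = a" using Q Q1ne less.prems(3) unfolding a_def by simp
    have vA1: "vp E (P1 @ [c])" and vA2: "vp E (c # P2)" using less.prems(1) P vp_app[of E P1 c P2] by auto
    have vB1: "vp E (Q1 @ [c])" and vB2: "vp E (c # Q2)" using less.prems(2) Q vp_app[of E Q1 c Q2] by auto
    have lA2: "last (c # P2) = b" using P unfolding b_def by simp
    have lB2: "last (c # Q2) = b" using Q less.prems(4) unfolding b_def by simp
    have "length (c # P2) < length P" using P P1ne by simp
    moreover have "c \<in> V" using cP VP by auto
    ultimately obtain R2 where R2: "vp E R2" "hd R2 = c" "last R2 = b"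
        "geq (pp R2) (pp (c#P2))" "geq (pp R2) (pp (c#Q2))"
      using less.hyps[OF _ vA2 vB2] lA2 lB2 by fastforce
    have gA1: "good (pp (P1@[c])) (y a) (y c)" "pos a \<in> pp (P1@[c])" "pos c \<in> pp (P1@[c])"
      using good_path[OF vA1] hP1 P1ne by auto
    have gB1: "good (pp (Q1@[c])) (y a) (y c)" "pos a \<in> pp (Q1@[c])" "pos c \<in> pp (Q1@[c])"
      using good_path[OF vB1] hQ1 Q1ne by auto
    have gA2: "good (pp (c#P2)) (y c) (y b)" "pos c \<in> pp (c#P2)"
      using good_path[OF vA2] lA2 by auto
    have gB2: "good (pp (c#Q2)) (y c) (y b)" "pos c \<in> pp (c#Q2)"
      using good_path[OF vB2] lB2 by auto
    have gR2: "good (pp R2) (y c) (y b)" "pos c \<in> pp R2"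
      using good_path[OF R2(1)] R2(2,3) by auto
    have ac: "y a \<le> y c" using good_heights[OF gA1(1) gA1(3)] by simp
    have VA1: "set (P1@[c]) \<subseteq> V" "set (Q1@[c]) \<subseteq> V" using VP VQ P Q by auto
    have disj: "set (P1@[c]) \<inter> set (Q1@[c]) \<subseteq> {a, c}"
    proof
      fix x assume x: "x \<in> set (P1@[c]) \<inter> set (Q1@[c])"
      show "x \<in> {a,c}"
      proof (rule ccontr)
        assume "x \<notin> {a,c}"
        hence "x \<in> set P1" "x \<in> C" using x P Q unfolding C_def by auto
        hence "y x < y c" "y c \<le> y x" using sP P cmin by (auto simp: sorted_wrt_append)
        thus False by simp
      qed
    qed
    have cross: "geq (pp (P1@[c])) (pp (Q1@[c])) \<or> geq (pp (Q1@[c])) (pp (P1@[c]))"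
    proof (cases "P1@[c] = Q1@[c]")
      case True thus ?thesis using good_refl[OF gA1(1)] by simp
    next
      case neq: False
      have fa: "fx (pp (P1@[c])) (y a) = fx (pp (Q1@[c])) (y a)"
        using good_fx_eq[OF gA1(1), of "fst (pos a)"] good_fx_eq[OF gB1(1), of "fst (pos a)"] gA1(2) gB1(2)
        by simp
      have fc: "fx (pp (P1@[c])) (y c) = fx (pp (Q1@[c])) (y c)"
        using good_fx_eq[OF gA1(1), of "fst (pos c)"] good_fx_eq[OF gB1(1), of "fst (pos c)"] gA1(3) gB1(3)
        by simp
      have "\<forall>p\<in>pp (P1@[c]) \<inter> pp (Q1@[c]). snd p = y a \<or> snd p = y c"
      proof
        fix p assume p: "p \<in> pp (P1@[c]) \<inter> pp (Q1@[c])"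
        from inter[OF vA1 vB1 VA1 _ _] p
        have "(\<exists>v\<in>set (P1@[c]) \<inter> set (Q1@[c]). p = pos v) \<or>
          (\<exists>e. e\<in>set (zip (P1@[c]) (tl (P1@[c]))) \<and> e \<in> set (zip (Q1@[c]) (tl (Q1@[c]))))" by blast
        thus "snd p = y a \<or> snd p = y c"
        proof
          assume "\<exists>v\<in>set (P1@[c]) \<inter> set (Q1@[c]). p = pos v"
          thus ?thesis using disj by auto
        next
          assume "\<exists>e. e\<in>set (zip (P1@[c]) (tl (P1@[c]))) \<and> e \<in> set (zip (Q1@[c]) (tl (Q1@[c])))"
          then obtain p1 q1 where e: "(p1,q1)\<in>set (zip (P1@[c]) (tl (P1@[c])))"
             "(p1,q1)\<in>set (zip (Q1@[c]) (tl (Q1@[c])))" by auto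
          have "(p1,q1) \<in> E" using vp_edges[OF vA1] e(1) by auto
          hence yl: "y p1 < y q1" using edge_good(1) by blast
          have "p1 \<in> {a,c}" "q1 \<in> {a,c}" using edges_set[OF e(1)] edges_set[OF e(2)] disj by auto
          hence "p1 = a" "q1 = c" using yl ac by auto
          hence "P1@[c] = [a,c]" "Q1@[c] = [a,c]"
            using shared_edge[OF vA1 _ _ e(1)[unfolded \<open>p1 = a\<close> \<open>q1 = c\<close>]]
              shared_edge[OF vB1 _ _ e(2)[unfolded \<open>p1 = a\<close> \<open>q1 = c\<close>]] hP1 hQ1 P1ne Q1ne by auto
          thus ?thesis using neq by simp
        qed
      qed
      thus ?thesis using crossing[OF gA1(1) gB1(1) ac fa fc] by blast
    qed
    obtain X where X: "X \<noteq> []" "hd X = a" "vp E (X @ [c])" "good (pp (X@[c])) (y a) (y c)"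
      "pos c \<in> pp (X@[c])" "geq (pp (X@[c])) (pp (P1@[c]))" "geq (pp (X@[c])) (pp (Q1@[c]))"
      using cross good_refl[OF gA1(1)] good_refl[OF gB1(1)] P1ne Q1ne hP1 hQ1 vA1 vB1 gA1 gB1 by blast
    obtain R2' where R2': "R2 = c # R2'" using R2(1,2) by (cases R2) auto
    define R where "R = X @ c # R2'"
    have vR: "vp E R" unfolding R_def using vp_app[of E X c R2'] X(3) R2(1) R2' by auto
    have hR: "hd R = a" unfolding R_def using X(1,2) by simp
    have lR: "last R = b" unfolding R_def using R2(3) R2' by simp
    have ppR: "pp R = pp (X@[c]) \<union> pp R2" unfolding R_def R2' by (rule pp_app)
    have ppP: "pp P = pp (P1@[c]) \<union> pp (c#P2)" unfolding P by (rule pp_app)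
    have ppQ: "pp Q = pp (Q1@[c]) \<union> pp (c#Q2)" unfolding Q by (rule pp_app)
    have g1: "geq (pp R) (pp P)" unfolding ppR ppP
      by (rule geq_union[OF X(6) R2(4) X(4) gA1(1) gR2(1) gA2(1) X(5) gA1(3) gR2(2) gA2(2)]) simp
    have g2: "geq (pp R) (pp Q)" unfolding ppR ppQ
      by (rule geq_union[OF X(7) R2(5) X(4) gB1(1) gR2(1) gB2(1) X(5) gB1(3) gR2(2) gB2(2)]) simp
    show ?thesis using vR hR lR g1 g2 unfolding a_def b_def by blast
  qed
qed

end



context drw begin

lemma sorted_distinct: "sorted_wrt (\<lambda>u v. y u < y v) xs \<Longrightarrow> distinct xs"
  by (induction xs) auto

lemma rightmost_ok:
  assumes "vp E R" "vp E Q" "hd R = hd Q" "last R = last Q" "geq (pp R) (pp Q)"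
  shows "pp R \<subseteq> pp Q \<union> Right_path pos gam Q"
proof
  fix p assume p: "p \<in> pp R"
  obtain x w where xw: "p = (x,w)" by (cases p)
  have gR: "good (pp R) (y (hd Q)) (y (last Q))" using good_path[OF assms(1)] assms(3,4) by simp
  have gQ: "good (pp Q) (y (hd Q)) (y (last Q))" using good_path[OF assms(2)] by simp
  have h: "y (hd Q) \<le> w" "w \<le> y (last Q)" using good_heights[OF gR p] xw by auto
  obtain x' where x': "(x',w) \<in> pp Q" using gQ h unfolding good_def by blast
  have le: "x' \<le> x" using assms(5) x' p xw unfolding geq_def by blast
  show "p \<in> pp Q \<union> Right_path pos gam Q"
  proof (cases "x' = x")
    case True thus ?thesis using x' xw by simp
  next
    case False
    hence "\<forall>u'. (u',w) \<in> pp Q \<longrightarrow> u' < x" using le good_uniq[OF gQ x'] by force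
    thus ?thesis unfolding Right_path_def Right_region_def using h xw by auto
  qed
qed

lemma rightmost_eq_pp:
  assumes "vp E P" "vp E P'" "hd P = hd P'" "last P = last P'"
    "pp P \<subseteq> pp P' \<union> Right_path pos gam P'" "pp P' \<subseteq> pp P \<union> Right_path pos gam P"
  shows "pp P \<subseteq> pp P'"
proof
  fix p assume p: "p \<in> pp P"
  obtain x w where xw: "p = (x,w)" by (cases p)
  have gP: "good (pp P) (y (hd P)) (y (last P))" using good_path[OF assms(1)] by simp
  have gP': "good (pp P') (y (hd P)) (y (last P))" using good_path[OF assms(2)] assms(3,4) by simp
  have h: "y (hd P) \<le> w" "w \<le> y (last P)" using good_heights[OF gP p] xw by auto
  obtain x' where x': "(x',w) \<in> pp P'" using gP' h unfolding good_def by blast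
  show "p \<in> pp P'"
  proof (rule ccontr)
    assume np: "p \<notin> pp P'"
    hence "p \<in> Right_path pos gam P'" using assms(5) p by blast
    hence lt: "x' < x" using x' xw unfolding Right_path_def Right_region_def by auto
    have "(x',w) \<in> pp P \<union> Right_path pos gam P" using assms(6) x' by blast
    thus False
    proof
      assume "(x',w) \<in> pp P" thus False using good_uniq[OF gP _ p[unfolded xw]] lt by force
    next
      assume "(x',w) \<in> Right_path pos gam P"
      hence "x < x'" using p xw unfolding Right_path_def Right_region_def by auto
      thus False using lt by simp
    qed
  qed
qed

end

theorem corollary1:
  fixes V :: "'v set" and E :: "('v \<times> 'v) set"
    and pos :: "'v \<Rightarrow> real \<times> real" and gam :: "'v \<times> 'v \<Rightarrow> real \<Rightarrow> real \<times> real"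
  assumes "finite V" and "E \<subseteq> V \<times> V"
    and "upward_planar_drawing V E pos gam"
    and "s \<in> V" and "t \<in> V"
    and "\<exists>ps. dir_path E s t ps"
  shows "\<exists>!ps. rightmost_path E pos gam s t ps"
proof -
  interpret drw V E pos gam using assms(2,3) by unfold_locales
  define Paths where "Paths = {ps. vp E ps \<and> hd ps = s \<and> last ps = t}"
  have dp: "dir_path E s t ps \<longleftrightarrow> ps \<in> Paths" for ps unfolding Paths_def dir_path_vp by simp
  have PV: "set ps \<subseteq> V" if "ps \<in> Paths" for ps using vp_V that assms(4) unfolding Paths_def by auto
  have fin: "finite Paths"
  proof (rule finite_subset)
    show "Paths \<subseteq> {xs. set xs \<subseteq> V \<and> length xs \<le> card V}"
    proof
      fix ps assume ps: "ps \<in> Paths"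
      have "distinct ps" using sorted_distinct vp_sorted ps unfolding Paths_def by auto
      hence "length ps = card (set ps)" by (simp add: distinct_card)
      also have "\<dots> \<le> card V" using PV[OF ps] assms(1) by (simp add: card_mono)
      finally show "ps \<in> {xs. set xs \<subseteq> V \<and> length xs \<le> card V}" using PV[OF ps] by simp
    qed
    show "finite {xs. set xs \<subseteq> V \<and> length xs \<le> card V}" using assms(1) by (rule finite_lists_length_le)
  qed
  obtain P0 where P0: "P0 \<in> Paths" using assms(6) dp by blast
  have gp: "good (pp ps) (y s) (y t)" if "ps \<in> Paths" for ps
    using good_path that unfolding Paths_def by auto
  have main: "finite S \<Longrightarrow> S \<subseteq> Paths \<Longrightarrow> \<exists>R\<in>Paths. \<forall>Q\<in>S. geq (pp R) (pp Q)" for S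
  proof (induction S rule: finite_induct)
    case empty thus ?case using P0 by blast
  next
    case (insert Q S)
    then obtain R where R: "R \<in> Paths" "\<forall>Q\<in>S. geq (pp R) (pp Q)" by blast
    have Q: "Q \<in> Paths" using insert.prems by blast
    obtain R' where R': "vp E R'" "hd R' = hd R" "last R' = last R" "geq (pp R') (pp R)" "geq (pp R') (pp Q)"
      using merge[of R Q] R(1) Q assms(4) unfolding Paths_def by auto
    have R'P: "R' \<in> Paths" using R' R(1) unfolding Paths_def by auto
    have "\<forall>Q'\<in>insert Q S. geq (pp R') (pp Q')"
    proof
      fix Q' assume "Q' \<in> insert Q S"
      thus "geq (pp R') (pp Q')"
      proof
        assume "Q' = Q" thus ?thesis using R'(5) by simp
      next
        assume q: "Q' \<in> S"
        hence "Q' \<in> Paths" using insert.prems by blast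
        thus ?thesis using geq_trans[OF R'(4) bspec[OF R(2) q] gp[OF R(1)] gp] by simp
      qed
    qed
    thus ?case using R'P by blast
  qed
  obtain R where R: "R \<in> Paths" "\<forall>Q\<in>Paths. geq (pp R) (pp Q)" using main[OF fin] by blast
  have ex: "rightmost_path E pos gam s t R"
    unfolding rightmost_path_def
  proof (intro conjI allI impI)
    show "dir_path E s t R" using dp R(1) by simp
    fix Q assume "dir_path E s t Q"
    hence Q: "Q \<in> Paths" using dp by simp
    show "pp R \<subseteq> pp Q \<union> Right_path pos gam Q"
      using rightmost_ok[of R Q] R Q unfolding Paths_def by auto
  qed
  have un: "P = P'" if "rightmost_path E pos gam s t P" "rightmost_path E pos gam s t P'" for P P'
  proof -
    have P: "P \<in> Paths" and P': "P' \<in> Paths" using that dp unfolding rightmost_path_def by auto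
    have c1: "pp P \<subseteq> pp P' \<union> Right_path pos gam P'" "pp P' \<subseteq> pp P \<union> Right_path pos gam P"
      using that P P' dp unfolding rightmost_path_def by auto
    have "pp P \<subseteq> pp P'" using rightmost_eq_pp[OF _ _ _ _ c1] P P' unfolding Paths_def by auto
    moreover have "pp P' \<subseteq> pp P" using rightmost_eq_pp[OF _ _ _ _ c1(2,1)] P P' unfolding Paths_def by auto
    ultimately have eq: "pp P = pp P'" by blast
    have vP: "vp E P" "vp E P'" using P P' unfolding Paths_def by auto
    have "set P = set P'"
    proof
      show "set P \<subseteq> set P'"
      proof
        fix v assume v: "v \<in> set P"
        have "pos v \<in> pp P" unfolding path_points_def using v by auto
        thus "v \<in> set P'" using vertex_in[OF vP(2) PV[OF P']] PV[OF P] v eq by auto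
      qed
      show "set P' \<subseteq> set P"
      proof
        fix v assume v: "v \<in> set P'"
        have "pos v \<in> pp P'" unfolding path_points_def using v by auto
        thus "v \<in> set P" using vertex_in[OF vP(1) PV[OF P]] PV[OF P'] v eq by auto
      qed
    qed
    thus ?thesis using lists_eq vp_sorted vP by blast
  qed
  show ?thesis using ex un by blast
qed



end
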